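(* Let $P$ be a monic polynomial in $\mathbb{Z}[x]$, and let $R$ be the set of real numbers $\beta$ such that $\|\beta a_n\|\to0$ for every sequence of integers $(a_n)$ satisfying the linear recurrence with characteristic polynomial $P$. Then $R$ is a ring, and if $P(0)=\pm1$ then $R$ is integral over $\mathbb{Z}$ (every element of $R$ is an algebraic integer).
   Context: $\|x\|$ denotes the distance from a real number $x$ to the nearest integer. A sequence satisfies the linear recurrence with characteristic polynomial $P(x)=x^k+p_{k-1}x^{k-1}+\dots+p_0$ if $a_{n+k}+p_{k-1}a_{n+k-1}+\dots+p_0a_n=0$ for all $n$. *)

theory Defs
  imports Complex_Main "HOL-Computational_Algebra.Polynomial"
begin

definition dist_nint :: "real \<Rightarrow> real" where
  "dist_nint x = min (x - of_int \<lfloor>x\<rfloor>) (of_int \<lceil>x\<rceil> - x)"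

definition satisfies_rec :: "int poly \<Rightarrow> (nat \<Rightarrow> int) \<Rightarrow> bool" where
  "satisfies_rec P a \<longleftrightarrow> (\<forall>n. (\<Sum>i\<le>degree P. coeff P i * a (n + i)) = 0)"

definition Rset :: "int poly \<Rightarrow> real set" where
  "Rset P = {\<beta>. \<forall>a. satisfies_rec P a \<longrightarrow>
      ((\<lambda>n. dist_nint (\<beta> * of_int (a n))) \<longlonglongrightarrow> 0)}"

end

theory Submission
  imports Defs "Jordan_Normal_Form.Char_Poly"
begin


definition rnd :: "real \<Rightarrow> int" where
  "rnd x = (if x - of_int \<lfloor>x\<rfloor> \<le> of_int \<lceil>x\<rceil> - x then \<lfloor>x\<rfloor> else \<lceil>x\<rceil>)"

lemma dist_rnd: "dist_nint x = \<bar>x - of_int (rnd x)\<bar>"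
  unfolding dist_nint_def rnd_def
  by (auto simp: min_def)

lemma dist_nonneg: "0 \<le> dist_nint x"
  by (simp add: dist_rnd)

lemma dist_le: "dist_nint x \<le> \<bar>x - of_int z\<bar>"
proof -
  have "z \<le> \<lfloor>x\<rfloor> \<or> z \<ge> \<lceil>x\<rceil>"
    by (meson ceiling_le_iff floor_less_iff le_less_linear less_imp_le)
  then show ?thesis
  proof
    assume "z \<le> \<lfloor>x\<rfloor>"
    then have "real_of_int z \<le> of_int \<lfloor>x\<rfloor>" by simp
    then have "x - of_int \<lfloor>x\<rfloor> \<le> \<bar>x - of_int z\<bar>" using of_int_floor_le[of x] by linarith
    then show ?thesis unfolding dist_nint_def by (simp add: min.coboundedI1)
  next
    assume "z \<ge> \<lceil>x\<rceil>"
    then have "real_of_int z \<ge> of_int \<lceil>x\<rceil>" by simp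
    then have "of_int \<lceil>x\<rceil> - x \<le> \<bar>x - of_int z\<bar>" using le_of_int_ceiling[of x] by linarith
    then show ?thesis unfolding dist_nint_def by (simp add: min.coboundedI2)
  qed
qed

lemma dist_int: "dist_nint (of_int z) = 0"
  using dist_le[of "of_int z" z] dist_nonneg[of "of_int z"] by simp

lemma dist_uminus: "dist_nint (- x) = dist_nint x"
  unfolding dist_nint_def by (simp add: ceiling_minus floor_minus min.commute)

lemma dist_add: "dist_nint (x + y) \<le> dist_nint x + dist_nint y"
proof -
  have "dist_nint (x + y) \<le> \<bar>(x + y) - of_int (rnd x + rnd y)\<bar>" by (rule dist_le)
  also have "\<dots> \<le> \<bar>x - of_int (rnd x)\<bar> + \<bar>y - of_int (rnd y)\<bar>" by simp
  finally show ?thesis by (simp add: dist_rnd)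
qed

lemma null_cmp:
  assumes "\<And>n. 0 \<le> f n" "\<And>n. f n \<le> g n" "g \<longlonglongrightarrow> (0::real)"
  shows "f \<longlonglongrightarrow> 0"
  using assms by (intro tendsto_sandwich[of "\<lambda>_. 0" f sequentially g 0]) (auto intro: always_eventually)

lemma rec_iff:
  assumes "lead_coeff P = 1"
  shows "satisfies_rec P a \<longleftrightarrow>
    (\<forall>n. a (n + degree P) = - (\<Sum>i<degree P. coeff P i * a (n + i)))"
proof -
  have "(\<Sum>i\<le>degree P. coeff P i * a (n + i)) = (\<Sum>i<degree P. coeff P i * a (n + i)) + a (n + degree P)" for n
    using assms by (simp add: lessThan_Suc_atMost[symmetric])
  then show ?thesis unfolding satisfies_rec_def by (auto simp: add.commute eq_neg_iff_add_eq_0)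
qed

lemma rec_shift: "satisfies_rec P a \<Longrightarrow> satisfies_rec P (\<lambda>n. a (n + N))"
  unfolding satisfies_rec_def
proof
  fix n assume "\<forall>n. (\<Sum>i\<le>degree P. coeff P i * a (n + i)) = 0"
  then have "(\<Sum>i\<le>degree P. coeff P i * a (n + N + i)) = 0" by blast
  then show "(\<Sum>i\<le>degree P. coeff P i * a (n + i + N)) = 0" by (simp add: ac_simps)
qed

lemma rec_real:
  assumes "satisfies_rec P a"
  shows "(\<Sum>i\<le>degree P. real_of_int (coeff P i) * (x * of_int (a (n + i)))) = 0"
proof -
  have "(\<Sum>i\<le>degree P. real_of_int (coeff P i) * (x * of_int (a (n + i))))
      = x * of_int (\<Sum>i\<le>degree P. coeff P i * a (n + i))"
    by (simp add: sum_distrib_left ac_simps)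
  also have "\<dots> = 0" using assms unfolding satisfies_rec_def by simp
  finally show ?thesis .
qed

lemma eventually_rec:
  assumes sat: "satisfies_rec P a"
    and lim: "(\<lambda>n. dist_nint (x * of_int (a n))) \<longlonglongrightarrow> 0"
  shows "\<exists>N. \<forall>n\<ge>N. (\<Sum>i\<le>degree P. coeff P i * rnd (x * of_int (a (n + i)))) = 0"
proof -
  define e where "e n = x * of_int (a n) - of_int (rnd (x * of_int (a n)))" for n
  have "(\<lambda>n. \<bar>e n\<bar>) \<longlonglongrightarrow> 0" using lim by (simp add: e_def dist_rnd)
  then have e0: "e \<longlonglongrightarrow> 0" by (simp add: tendsto_rabs_zero_iff)
  define S where "S n = (\<Sum>i\<le>degree P. real_of_int (coeff P i) * e (n + i))" for n
  have "S \<longlonglongrightarrow> (\<Sum>i\<le>degree P. real_of_int (coeff P i) * 0)"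
    unfolding S_def
    by (intro tendsto_intros LIMSEQ_ignore_initial_segment[OF e0])
  then have S0: "S \<longlonglongrightarrow> 0" by simp
  have eq: "real_of_int (\<Sum>i\<le>degree P. coeff P i * rnd (x * of_int (a (n + i)))) = - S n" for n
  proof -
    have "real_of_int (\<Sum>i\<le>degree P. coeff P i * rnd (x * of_int (a (n + i))))
      = (\<Sum>i\<le>degree P. real_of_int (coeff P i) * (x * of_int (a (n + i)))) - S n"
      unfolding S_def e_def by (simp add: sum_subtractf[symmetric] algebra_simps)
    then show ?thesis using rec_real[OF sat] by simp
  qed
  have "eventually (\<lambda>n. dist (S n) 0 < 1) sequentially"
    using S0 by (rule tendstoD) simp
  then obtain N where N: "\<And>n. n \<ge> N \<Longrightarrow> \<bar>S n\<bar> < 1"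
    by (auto simp: eventually_sequentially)
  show ?thesis
  proof (intro exI allI impI)
    fix n assume "n \<ge> N"
    define z where "z = (\<Sum>i\<le>degree P. coeff P i * rnd (x * of_int (a (n + i))))"
    have "\<bar>real_of_int z\<bar> < 1" using N[OF \<open>n \<ge> N\<close>] eq[of n] unfolding z_def by simp
    then have "\<bar>z\<bar> < 1" by linarith
    then show "z = 0" by simp
  qed
qed

theorem ring_part:
  fixes P :: "int poly"
  shows "0 \<in> Rset P \<and> 1 \<in> Rset P \<and>
         (\<forall>x\<in>Rset P. \<forall>y\<in>Rset P. x + y \<in> Rset P \<and> x - y \<in> Rset P \<and> x * y \<in> Rset P)"
proof (intro conjI ballI)
  show "0 \<in> Rset P" unfolding Rset_def by (simp add: dist_int[of 0, simplified])
  show "1 \<in> Rset P" unfolding Rset_def by (simp add: dist_int)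
  fix x y assume x: "x \<in> Rset P" and y: "y \<in> Rset P"
  show "x + y \<in> Rset P" unfolding Rset_def
  proof (intro CollectI allI impI)
    fix a assume a: "satisfies_rec P a"
    have "(\<lambda>n. dist_nint (x * of_int (a n)) + dist_nint (y * of_int (a n))) \<longlonglongrightarrow> 0 + 0"
      using x y a unfolding Rset_def by (intro tendsto_add) auto
    then show "(\<lambda>n. dist_nint ((x + y) * of_int (a n))) \<longlonglongrightarrow> 0"
      by (intro null_cmp[OF dist_nonneg]) (auto simp: distrib_right intro: dist_add)
  qed
  show "x - y \<in> Rset P" unfolding Rset_def
  proof (intro CollectI allI impI)
    fix a assume a: "satisfies_rec P a"
    have "(\<lambda>n. dist_nint (x * of_int (a n)) + dist_nint (- (y * of_int (a n)))) \<longlonglongrightarrow> 0 + 0"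
      using x y a unfolding Rset_def dist_uminus by (intro tendsto_add) auto
    then show "(\<lambda>n. dist_nint ((x - y) * of_int (a n))) \<longlonglongrightarrow> 0"
      by (intro null_cmp[OF dist_nonneg]) (auto simp: left_diff_distrib intro: dist_add[of _ "- _", simplified])
  qed
  show "x * y \<in> Rset P" unfolding Rset_def
  proof (intro CollectI allI impI)
    fix a assume a: "satisfies_rec P a"
    have lx: "(\<lambda>n. dist_nint (x * of_int (a n))) \<longlonglongrightarrow> 0" using x a unfolding Rset_def by auto
    obtain N where N: "\<And>n. n \<ge> N \<Longrightarrow> (\<Sum>i\<le>degree P. coeff P i * rnd (x * of_int (a (n + i)))) = 0"
      using eventually_rec[OF a lx] by blast
    define c where "c n = rnd (x * of_int (a (n + N)))" for n
    have c: "satisfies_rec P c" unfolding satisfies_rec_def c_def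
    proof
      fix n show "(\<Sum>i\<le>degree P. coeff P i * rnd (x * of_int (a (n + i + N)))) = 0"
        using N[of "n + N"] by (simp add: ac_simps)
    qed
    have ly: "(\<lambda>n. dist_nint (y * of_int (c n))) \<longlonglongrightarrow> 0" using y c unfolding Rset_def by auto
    have lx': "(\<lambda>n. \<bar>y\<bar> * dist_nint (x * of_int (a (n + N)))) \<longlonglongrightarrow> \<bar>y\<bar> * 0"
      by (intro tendsto_intros LIMSEQ_ignore_initial_segment[OF lx])
    have bound: "dist_nint ((x * y) * of_int (a (n + N)))
        \<le> \<bar>y\<bar> * dist_nint (x * of_int (a (n + N))) + dist_nint (y * of_int (c n))" for n
    proof -
      have "dist_nint ((x * y) * of_int (a (n + N))) \<le> \<bar>(x * y) * of_int (a (n + N)) - of_int (rnd (y * of_int (c n)))\<bar>"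
        by (rule dist_le)
      also have "(x * y) * of_int (a (n + N)) - of_int (rnd (y * of_int (c n)))
          = y * (x * of_int (a (n + N)) - of_int (c n)) + (y * of_int (c n) - of_int (rnd (y * of_int (c n))))"
        by (simp add: algebra_simps)
      also have "\<bar>\<dots>\<bar> \<le> \<bar>y\<bar> * \<bar>x * of_int (a (n + N)) - of_int (c n)\<bar> + \<bar>y * of_int (c n) - of_int (rnd (y * of_int (c n)))\<bar>"
        by (metis abs_mult abs_triangle_ineq)
      finally show ?thesis by (simp add: dist_rnd c_def)
    qed
    have "(\<lambda>n. dist_nint ((x * y) * of_int (a (n + N)))) \<longlonglongrightarrow> 0"
      using tendsto_add[OF lx' ly]
      by (intro null_cmp[OF dist_nonneg bound]) simp
    then show "(\<lambda>n. dist_nint ((x * y) * of_int (a n))) \<longlonglongrightarrow> 0"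
      by (rule LIMSEQ_offset)
  qed
qed



function solext :: "int poly \<Rightarrow> (nat \<Rightarrow> int) \<Rightarrow> nat \<Rightarrow> int" where
  "solext P v n = (if n < degree P then v n
     else - (\<Sum>i<degree P. coeff P i * solext P v (n - degree P + i)))"
  by pat_completeness auto
termination by (relation "measure (\<lambda>(P,v,n). n)") auto

declare solext.simps[simp del]

lemma solext_init: "n < degree P \<Longrightarrow> solext P v n = v n"
  by (simp add: solext.simps)

lemma solext_rec:
  assumes "lead_coeff P = 1"
  shows "satisfies_rec P (solext P v)"
  unfolding rec_iff[OF assms]
  by (subst solext.simps) (simp add: ac_simps)

lemma expand:
  assumes lc: "lead_coeff P = 1" and b: "satisfies_rec P b"
  shows "b n = (\<Sum>l<degree P. b l * solext P (\<lambda>i. if i = l then 1 else 0) n)"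
proof (induction n rule: less_induct)
  case (less n)
  show ?case
  proof (cases "n < degree P")
    case True
    then show ?thesis by (simp add: solext_init if_distrib cong: if_cong)
  next
    case False
    define m where "m = n - degree P"
    have n: "n = m + degree P" using False m_def by simp
    have "b n = - (\<Sum>i<degree P. coeff P i * b (m + i))"
      using b unfolding rec_iff[OF lc] n by blast
    also have "\<dots> = - (\<Sum>i<degree P. coeff P i *
        (\<Sum>l<degree P. b l * solext P (\<lambda>i. if i = l then 1 else 0) (m + i)))"
      by (intro arg_cong[where f = uminus] sum.cong refl arg_cong2[where f = "(*)"] less) (simp add: n)
    also have "\<dots> = (\<Sum>l<degree P. b l * (- (\<Sum>i<degree P. coeff P i *
        solext P (\<lambda>i. if i = l then 1 else 0) (m + i))))"
      unfolding sum_negf[symmetric] sum_distrib_left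
      by (subst sum.swap) (simp add: ac_simps)
    also have "\<dots> = (\<Sum>l<degree P. b l * solext P (\<lambda>i. if i = l then 1 else 0) n)"
      by (intro sum.cong refl arg_cong2[where f = "(*)"]) (subst (2) solext.simps, simp add: n)
    finally show ?thesis .
  qed
qed

lemma vanish:
  assumes lc: "lead_coeff P = 1" and p0: "coeff P 0 = 1 \<or> coeff P 0 = -1"
    and a: "satisfies_rec P a"
  shows "(\<forall>i<degree P. a (n + i) = 0) \<Longrightarrow> (\<forall>i<degree P. a i = 0)"
proof (induction n)
  case 0
  then show ?case by simp
next
  case (Suc n)
  have "\<forall>i<degree P. a (n + i) = 0"
  proof (intro allI impI)
    fix i assume i: "i < degree P"
    show "a (n + i) = 0"
    proof (cases i)
      case (Suc j)
      then show ?thesis using Suc.prems i by (auto dest: spec[of _ j])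
    next
      case 0
      have k: "degree P > 0" using i by simp
      then obtain d where d: "degree P = Suc d" by (cases "degree P") auto
      have "(\<Sum>i\<le>degree P. coeff P i * a (n + i)) = 0" using a unfolding satisfies_rec_def by blast
      also have "(\<Sum>i\<le>degree P. coeff P i * a (n + i)) = coeff P 0 * a n + (\<Sum>i\<le>d. coeff P (Suc i) * a (Suc n + i))"
        unfolding d sum.atMost_Suc_shift by simp
      also have "(\<Sum>i\<le>d. coeff P (Suc i) * a (Suc n + i)) = 0"
        using Suc.prems d by (intro sum.neutral) auto
      finally have "coeff P 0 * a n = 0" by simp
      then show ?thesis using p0 0 by auto
    qed
  qed
  then show ?case using Suc.IH by blast
qed

lemma ext1:
  assumes p0: "coeff P 0 = 1 \<or> coeff P 0 = -1" and deg: "degree P \<ge> 1"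
    and c: "satisfies_rec P c"
  shows "\<exists>b. satisfies_rec P b \<and> (\<forall>n. b (Suc n) = c n)"
proof -
  obtain d where d: "degree P = Suc d" using deg by (cases "degree P") auto
  define X where "X = - coeff P 0 * (\<Sum>i\<le>d. coeff P (Suc i) * c i)"
  define b where "b n = (if n = 0 then X else c (n - 1))" for n
  have "satisfies_rec P b" unfolding satisfies_rec_def
  proof
    fix n show "(\<Sum>i\<le>degree P. coeff P i * b (n + i)) = 0"
    proof (cases n)
      case 0
      have sq: "coeff P 0 * coeff P 0 = 1" using p0 by auto
      have "(\<Sum>i\<le>degree P. coeff P i * b (n + i)) = coeff P 0 * X + (\<Sum>i\<le>d. coeff P (Suc i) * c i)"
        unfolding d sum.atMost_Suc_shift by (simp add: 0 b_def)
      also have "\<dots> = 0" unfolding X_def using sq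
        by (simp add: algebra_simps)
      finally show ?thesis .
    next
      case (Suc m)
      have "(\<Sum>i\<le>degree P. coeff P i * c (m + i)) = 0" using c unfolding satisfies_rec_def by blast
      then show ?thesis by (simp add: Suc b_def)
    qed
  qed
  then show ?thesis by (auto simp: b_def)
qed

lemma extN:
  assumes p0: "coeff P 0 = 1 \<or> coeff P 0 = -1" and deg: "degree P \<ge> 1"
  shows "satisfies_rec P c \<Longrightarrow> \<exists>b. satisfies_rec P b \<and> (\<forall>n. b (n + N) = c n)"
proof (induction N arbitrary: c)
  case 0
  then show ?case by auto
next
  case (Suc N)
  obtain b where b: "satisfies_rec P b" "\<forall>n. b (Suc n) = c n" using ext1[OF p0 deg Suc.prems] by blast
  obtain b' where "satisfies_rec P b'" "\<forall>n. b' (n + N) = b n" using Suc.IH[OF b(1)] by blast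
  then show ?case using b(2) by (intro exI[of _ b']) (auto simp flip: add_Suc)
qed



lemma alg_part:
  fixes P :: "int poly" and \<beta> :: real
  assumes lc: "lead_coeff P = 1" and deg: "degree P \<ge> 1"
    and p0: "poly P 0 = 1 \<or> poly P 0 = -1" and \<beta>: "\<beta> \<in> Rset P"
  shows "algebraic_int \<beta>"
proof -
  define k where "k = degree P"
  have p0': "coeff P 0 = 1 \<or> coeff P 0 = -1" using p0 by (simp add: poly_0_coeff_0)
  define e where "e l = solext P (\<lambda>i. if i = l then 1 else 0)" for l
  have e_rec: "satisfies_rec P (e l)" for l using solext_rec[OF lc] by (simp add: e_def)
  have lim: "(\<lambda>n. dist_nint (\<beta> * of_int (e l n))) \<longlonglongrightarrow> 0" for l
    using \<beta> e_rec unfolding Rset_def by blast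
  have ev: "eventually (\<lambda>n. \<forall>j\<in>{..<k}. (\<Sum>i\<le>degree P. coeff P i * rnd (\<beta> * of_int (e j (n + i)))) = 0) sequentially"
  proof (intro eventually_ball_finite ballI)
    fix j
    obtain N where "\<forall>n\<ge>N. (\<Sum>i\<le>degree P. coeff P i * rnd (\<beta> * of_int (e j (n + i)))) = 0"
      using eventually_rec[OF e_rec lim] by blast
    then show "eventually (\<lambda>n. (\<Sum>i\<le>degree P. coeff P i * rnd (\<beta> * of_int (e j (n + i)))) = 0) sequentially"
      by (auto simp: eventually_sequentially)
  qed simp
  then obtain N where N: "\<And>n j. n \<ge> N \<Longrightarrow> j < k \<Longrightarrow> (\<Sum>i\<le>degree P. coeff P i * rnd (\<beta> * of_int (e j (n + i)))) = 0"
    by (auto simp: eventually_sequentially)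
  have c_rec: "satisfies_rec P (\<lambda>n. rnd (\<beta> * of_int (e j (n + N))))" if "j < k" for j
    unfolding satisfies_rec_def
  proof
    fix n show "(\<Sum>i\<le>degree P. coeff P i * rnd (\<beta> * of_int (e j (n + i + N)))) = 0"
      using N[of "n + N" j] that by (simp add: ac_simps)
  qed
  have ex: "\<forall>j. \<exists>bj. j < k \<longrightarrow> satisfies_rec P bj \<and> (\<forall>n. bj (n + N) = rnd (\<beta> * of_int (e j (n + N))))"
    using extN[OF p0' deg c_rec] by blast
  obtain b where bb: "\<forall>j. j < k \<longrightarrow> satisfies_rec P (b j) \<and> (\<forall>n. b j (n + N) = rnd (\<beta> * of_int (e j (n + N))))"
    using choice[OF ex] by blast
  then have b: "\<And>j. j < k \<Longrightarrow> satisfies_rec P (b j)"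
    "\<And>j n. j < k \<Longrightarrow> b j (n + N) = rnd (\<beta> * of_int (e j (n + N)))"
    by blast+
  have conv: "(\<lambda>n. \<beta> * of_int (e j (n + i)) - (\<Sum>l<k. of_int (e l (n + i)) * of_int (b j l))) \<longlonglongrightarrow> 0"
    if j: "j < k" for i j
  proof -
    have "(\<lambda>n. \<beta> * of_int (e j n) - of_int (rnd (\<beta> * of_int (e j n)))) \<longlonglongrightarrow> 0"
      using lim[of j] unfolding dist_rnd tendsto_rabs_zero_iff .
    moreover have "eventually (\<lambda>n. \<beta> * of_int (e j n) - of_int (rnd (\<beta> * of_int (e j n)))
        = \<beta> * of_int (e j n) - (\<Sum>l<k. of_int (e l n) * of_int (b j l))) sequentially"
    proof (rule eventually_sequentiallyI[of N])
      fix n assume "n \<ge> N"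
      then have m: "(n - N) + N = n" by simp
      have "rnd (\<beta> * of_int (e j n)) = b j n" using b(2)[OF j, of "n - N"] unfolding m by simp
      also have "\<dots> = (\<Sum>l<k. b j l * e l n)" unfolding e_def k_def by (rule expand[OF lc b(1)[OF j]])
      finally show "\<beta> * of_int (e j n) - of_int (rnd (\<beta> * of_int (e j n)))
        = \<beta> * of_int (e j n) - (\<Sum>l<k. of_int (e l n) * of_int (b j l))"
        by (simp add: mult.commute)
    qed
    ultimately have "(\<lambda>n. \<beta> * of_int (e j n) - (\<Sum>l<k. of_int (e l n) * of_int (b j l))) \<longlonglongrightarrow> 0"
      by (rule Lim_transform_eventually)
    then show ?thesis by (rule LIMSEQ_ignore_initial_segment)
  qed
  define D where "D = mat k k (\<lambda>(l, j). (if l = j then \<beta> else 0) - real_of_int (b j l))"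
  have Dc: "D \<in> carrier_mat k k" by (simp add: D_def)
  have ED: "(\<Sum>l<k. of_int (e l (n + i)) * D $$ (l, j))
      = \<beta> * of_int (e j (n + i)) - (\<Sum>l<k. of_int (e l (n + i)) * of_int (b j l))"
    if j: "j < k" for i j n
  proof -
    have "(\<Sum>l<k. of_int (e l (n + i)) * D $$ (l, j))
        = (\<Sum>l<k. (if l = j then of_int (e l (n + i)) * \<beta> else 0) - of_int (e l (n + i)) * of_int (b j l))"
      by (intro sum.cong refl) (simp add: D_def j right_diff_distrib)
    also have "\<dots> = \<beta> * of_int (e j (n + i)) - (\<Sum>l<k. of_int (e l (n + i)) * of_int (b j l))"
      using j by (simp add: sum_subtractf mult.commute)
    finally show ?thesis .
  qed
  have k0: "0 < k" using deg k_def by simp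
  have det0: "det D = 0"
  proof (rule ccontr)
    assume "det D \<noteq> 0"
    from det_non_zero_imp_unit[OF Dc this] obtain D' where D': "D' \<in> carrier_mat k k" "D * D' = 1\<^sub>m k"
      by (auto simp: Units_def ring_mat_def)
    have prod: "(\<Sum>j<k. D $$ (l, j) * D' $$ (j, r)) = (if l = r then 1 else 0)" if "l < k" "r < k" for l r
    proof -
      have "(D * D') $$ (l, r) = (\<Sum>j<k. D $$ (l, j) * D' $$ (j, r))"
        using that Dc D'(1) by (simp add: scalar_prod_def atLeast0LessThan)
      then show ?thesis using D'(2) that by simp
    qed
    have lim0: "(\<lambda>n. real_of_int (e 0 (n + i))) \<longlonglongrightarrow> 0" for i
    proof -
      have "(\<lambda>n. \<Sum>j<k. (\<Sum>l<k. of_int (e l (n + i)) * D $$ (l, j)) * D' $$ (j, 0))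
          \<longlonglongrightarrow> (\<Sum>j<k. 0 * D' $$ (j, 0))"
      proof (rule tendsto_sum)
        fix j assume "j \<in> {..<k}"
        then show "(\<lambda>n. (\<Sum>l<k. of_int (e l (n + i)) * D $$ (l, j)) * D' $$ (j, 0)) \<longlonglongrightarrow> 0 * D' $$ (j, 0)"
          using conv[of j i] by (intro tendsto_mult tendsto_const) (simp add: ED)
      qed
      moreover have "(\<Sum>j<k. (\<Sum>l<k. of_int (e l (n + i)) * D $$ (l, j)) * D' $$ (j, 0)) = of_int (e 0 (n + i))" for n
      proof -
        have "(\<Sum>j<k. (\<Sum>l<k. of_int (e l (n + i)) * D $$ (l, j)) * D' $$ (j, 0))
            = (\<Sum>l<k. of_int (e l (n + i)) * (\<Sum>j<k. D $$ (l, j) * D' $$ (j, 0)))"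
          unfolding sum_distrib_left sum_distrib_right mult.assoc by (rule sum.swap)
        also have "\<dots> = (\<Sum>l<k. of_int (e l (n + i)) * (if l = 0 then 1 else 0))"
          using prod k0 by (intro sum.cong) auto
        also have "\<dots> = (\<Sum>l<k. (if l = 0 then of_int (e l (n + i)) else 0))"
          by (intro sum.cong) auto
        also have "\<dots> = of_int (e 0 (n + i))" using k0 by (simp add: sum.delta)
        finally show ?thesis .
      qed
      ultimately show ?thesis by simp
    qed
    have "eventually (\<lambda>n. \<forall>i\<in>{..<k}. dist (real_of_int (e 0 (n + i))) 0 < 1) sequentially"
      using lim0 by (intro eventually_ball_finite ballI tendstoD) auto
    then obtain n where n: "\<And>i. i < k \<Longrightarrow> \<bar>real_of_int (e 0 (n + i))\<bar> < 1"
      by (auto simp: eventually_sequentially)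
    have "\<forall>i<degree P. e 0 (n + i) = 0"
    proof (intro allI impI)
      fix i assume "i < degree P"
      then have "\<bar>real_of_int (e 0 (n + i))\<bar> < 1" using n k_def by simp
      then have "\<bar>e 0 (n + i)\<bar> < 1" by linarith
      then show "e 0 (n + i) = 0" by simp
    qed
    from vanish[OF lc p0' e_rec this] have "e 0 0 = 0" using k0 k_def by simp
    moreover have "e 0 0 = 1" using k0 k_def by (simp add: e_def solext_init)
    ultimately show False by simp
  qed
  define T where "T = mat k k (\<lambda>(l, j). b j l)"
  have Tc: "T \<in> carrier_mat k k" by (simp add: T_def)
  have "D = - char_matrix (map_mat real_of_int T) \<beta>"
    by (rule eq_matI) (auto simp: D_def T_def char_matrix_def)
  then have "poly (char_poly (map_mat real_of_int T)) \<beta> = 0"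
    using char_poly_matrix[of "map_mat real_of_int T" k \<beta>] Tc det0 by simp
  moreover have "char_poly (map_mat real_of_int T) = map_poly of_int (char_poly T)"
    using of_int_hom.char_poly_hom[OF Tc] .
  moreover have "lead_coeff (char_poly T) = 1" using degree_monic_char_poly[OF Tc] by simp
  ultimately show ?thesis unfolding algebraic_int_altdef_ipoly by auto
qed


theorem mainTheorem13:
  fixes P :: "int poly"
  assumes "lead_coeff P = 1" and "degree P \<ge> 1"
  shows "0 \<in> Rset P \<and> 1 \<in> Rset P \<and>
         (\<forall>x\<in>Rset P. \<forall>y\<in>Rset P. x + y \<in> Rset P \<and> x - y \<in> Rset P \<and> x * y \<in> Rset P)
         \<and> ((poly P 0 = 1 \<or> poly P 0 = -1) \<longrightarrow> (\<forall>\<beta>\<in>Rset P. algebraic_int \<beta>))"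
  using ring_part[of P] alg_part[OF assms] by blast

end
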